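(* Consider Setting A with all nodes running Algorithm 1 (any graph sequence, any gains). Fix a sub-state $j$, a node $i\in\mathcal V\setminus\{j\}$ and a time $k$ such that $\tau^{(j)}_i[k]=m$ with $m\in\mathbb N_+$. Then there exist nodes $v(\tau)\in\mathcal V\setminus\{j\}$, $\tau\in\{k-m+1,\dots,k\}$ (with $v(k)=i$), such that $$\hat z^{(j)}_i[k]=A_{jj}^{m}\,\hat z^{(j)}_j[k-m]+\sum_{q=1}^{j-1}\sum_{\tau=k-m}^{k-1}A_{jj}^{\,k-\tau-1}A_{jq}\,\hat z^{(q)}_{v(\tau+1)}[\tau].$$
   Context: Setting A. Consider the discrete-time LTI system $x[k+1]=Ax[k]$, $k\in\mathbb N$, with $A\in\mathbb R^{n\times n}$, monitored by $N$ nodes $\mathcal V=\{1,\dots,N\}$; node $i$ measures $y_i[k]=C_ix[k]$ with $C_i\in\mathbb R^{r_i\times n}$. Let $C=[C_1^T\ \cdots\ C_N^T]^T$ and assume $(A,C)$ is observable. Fix an invertible $T$ such that $\bar A=T^{-1}AT$ is block lower-triangular with diagonal blocks $A_{11},\dots,A_{NN}$ and off-diagonal blocks $A_{jq}$ ($q<j$), zero blocks above the diagonal, and $C_iT=[C_{i1}\ \cdots\ C_{ii}\ 0\ \cdots\ 0]$ for each $i$, with $(A_{jj},C_{jj})$ observable for every $j$ (such $T$ exists). With $z[k]=T^{-1}x[k]$ partitioned compatibly into sub-states $z^{(1)}[k],\dots,z^{(N)}[k]$, one has $z^{(j)}[k+1]=A_{jj}z^{(j)}[k]+\sum_{q=1}^{j-1}A_{jq}z^{(q)}[k]$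 and $y_j[k]=\sum_{q=1}^{j}C_{jq}z^{(q)}[k]$. Node $j$ is called the source node of sub-state $j$. Communication: at each time $k$ there is a directed graph $\mathcal G[k]=(\mathcal V,\mathcal E[k])$; $(l,i)\in\mathcal E[k]$ means $l$ can send to $i$ at time $k$; $\mathcal N_i[k]=\{l\neq i:(l,i)\in\mathcal E[k]\}$. The union graph over $[k_1,k_2]$ has vertex set $\mathcal V$ and edge set $\bigcup_{\tau=k_1}^{k_2}\mathcal E[\tau]$. Algorithm 1 (run for every sub-state $j$ simultaneously). Each node $i$ keeps an estimate $\hat z^{(j)}_i[k]$ (arbitrary initial value) and a freshness index $\tau^{(j)}_i[k]\in\mathbb N\cup\{\omega\}$, where $\omega$ is a special symbol; initially $\tau^{(j)}_j[0]=0$ and $\tau^{(j)}_i[0]=\omega$ for $i\ne j$. Source node $j$: $\tau^{(j)}_j[k]=0$ for all $k$, and $\hat z^{(j)}_j[k+1]=(A_{jj}-L_jC_{jj})\hat z^{(j)}_j[k]+\sum_{q=1}^{j-1}(A_{jq}-L_jC_{jq})\hat z^{(q)}_j[k]+L_jy_j[k]$, where $L_j$ is an observer gain. Non-source node $i\neq j$ at time $k$: let $\mathcal M^{(j)}_i[k]=\{l\in\mathcal N_i[k]:\tau^{(j)}_l[k]\neq\omega\}$; if $\tau^{(j)}_i[k]=\omega$ let $\mathcal F^{(j)}_i[k]=\mathcal M^{(j)}_i[k]$, otherwise $\mathcal F^{(j)}_i[k]=\{l\in\mathcal M^{(j)}_i[k]:\tau^{(j)}_l[k]<\tau^{(j)}_i[k]\}$.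 If $\mathcal F^{(j)}_i[k]\ne\emptyset$, pick $u\in\arg\min_{l\in\mathcal F^{(j)}_i[k]}\tau^{(j)}_l[k]$ and set $\tau^{(j)}_i[k+1]=\tau^{(j)}_u[k]+1$ and $\hat z^{(j)}_i[k+1]=A_{jj}\hat z^{(j)}_u[k]+\sum_{q=1}^{j-1}A_{jq}\hat z^{(q)}_i[k]$ ("$i$ adopts the information of $u$ at time $k$"). If $\mathcal F^{(j)}_i[k]=\emptyset$, set $\tau^{(j)}_i[k+1]=\omega$ if $\tau^{(j)}_i[k]=\omega$ and $\tau^{(j)}_i[k+1]=\tau^{(j)}_i[k]+1$ otherwise, and $\hat z^{(j)}_i[k+1]=A_{jj}\hat z^{(j)}_i[k]+\sum_{q=1}^{j-1}A_{jq}\hat z^{(q)}_i[k]$ ("$i$ adopts its own information"). *)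

theory Defs
  imports "Jordan_Normal_Form.Matrix"
begin

(* Conventions:
   nodes and sub-states are 1..N;
   Ab j q  : block A_{jq} (d j x d q),   Cb j q : block C_{jq} (r j x d q),
   L j     : observer gain L_j (d j x r j);
   tau j i k : freshness index tau^{(j)}_i[k], None encodes the symbol omega;
   zh j i k  : estimate zhat^{(j)}_i[k];
   G k       : edge set E[k], (l,i) \<in> G k means l can send to i at time k. *)

definition vsum :: "nat \<Rightarrow> ('c \<Rightarrow> real vec) \<Rightarrow> 'c set \<Rightarrow> real vec" where
  "vsum n f S = finsum_vec TYPE(real) n f S"

definition nbrs :: "nat \<Rightarrow> (nat \<Rightarrow> (nat \<times> nat) set) \<Rightarrow> nat \<Rightarrow> nat \<Rightarrow> nat set" where
  "nbrs N G i k = {l \<in> {1..N}. l \<noteq> i \<and> (l, i) \<in> G k}"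

definition Mset :: "nat \<Rightarrow> (nat \<Rightarrow> (nat \<times> nat) set) \<Rightarrow> (nat \<Rightarrow> nat \<Rightarrow> nat \<Rightarrow> nat option)
                    \<Rightarrow> nat \<Rightarrow> nat \<Rightarrow> nat \<Rightarrow> nat set" where
  "Mset N G tau j i k = {l \<in> nbrs N G i k. tau j l k \<noteq> None}"

definition Fset :: "nat \<Rightarrow> (nat \<Rightarrow> (nat \<times> nat) set) \<Rightarrow> (nat \<Rightarrow> nat \<Rightarrow> nat \<Rightarrow> nat option)
                    \<Rightarrow> nat \<Rightarrow> nat \<Rightarrow> nat \<Rightarrow> nat set" where
  "Fset N G tau j i k =
     (if tau j i k = None then Mset N G tau j i k
      else {l \<in> Mset N G tau j i k. the (tau j l k) < the (tau j i k)})"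

definition coupling :: "(nat \<Rightarrow> nat) \<Rightarrow> (nat \<Rightarrow> nat \<Rightarrow> real mat)
                        \<Rightarrow> (nat \<Rightarrow> nat \<Rightarrow> nat \<Rightarrow> real vec) \<Rightarrow> nat \<Rightarrow> nat \<Rightarrow> nat \<Rightarrow> real vec" where
  "coupling d Ab zh j i k = vsum (d j) (\<lambda>q. Ab j q *\<^sub>v zh q i k) {1..<j}"

(* Algorithm 1, run for every sub-state j simultaneously, on the graph sequence G,
   with measurements y. The arg-min choice is arbitrary (any tie-breaking). *)
definition algorithm1 ::
  "nat \<Rightarrow> (nat \<Rightarrow> nat) \<Rightarrow> (nat \<Rightarrow> nat \<Rightarrow> real mat) \<Rightarrow> (nat \<Rightarrow> nat \<Rightarrow> real mat) \<Rightarrow> (nat \<Rightarrow> real mat)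
   \<Rightarrow> (nat \<Rightarrow> nat \<Rightarrow> real vec) \<Rightarrow> (nat \<Rightarrow> (nat \<times> nat) set)
   \<Rightarrow> (nat \<Rightarrow> nat \<Rightarrow> nat \<Rightarrow> nat option) \<Rightarrow> (nat \<Rightarrow> nat \<Rightarrow> nat \<Rightarrow> real vec) \<Rightarrow> bool" where
  "algorithm1 N d Ab Cb L y G tau zh \<longleftrightarrow>
     (\<forall>j\<in>{1..N}. \<forall>i\<in>{1..N}. zh j i 0 \<in> carrier_vec (d j)) \<and>
     (\<forall>j\<in>{1..N}. \<forall>i\<in>{1..N}. i \<noteq> j \<longrightarrow> tau j i 0 = None) \<and>
     (\<forall>j\<in>{1..N}. \<forall>k. tau j j k = Some 0 \<and>
        zh j j (Suc k) = (Ab j j - L j * Cb j j) *\<^sub>v zh j j k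
                         + vsum (d j) (\<lambda>q. (Ab j q - L j * Cb j q) *\<^sub>v zh q j k) {1..<j}
                         + L j *\<^sub>v y j k) \<and>
     (\<forall>j\<in>{1..N}. \<forall>i\<in>{1..N}. i \<noteq> j \<longrightarrow> (\<forall>k.
        (Fset N G tau j i k \<noteq> {} \<longrightarrow>
           (\<exists>u\<in>Fset N G tau j i k.
              (\<forall>l\<in>Fset N G tau j i k. the (tau j u k) \<le> the (tau j l k)) \<and>
              tau j i (Suc k) = Some (Suc (the (tau j u k))) \<and>
              zh j i (Suc k) = Ab j j *\<^sub>v zh j u k + coupling d Ab zh j i k)) \<and>
        (Fset N G tau j i k = {} \<longrightarrow>
           tau j i (Suc k) = map_option Suc (tau j i k) \<and>
           zh j i (Suc k) = Ab j j *\<^sub>v zh j i k + coupling d Ab zh j i k)))"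

end

theory Submission imports Defs begin

lemmas vs_multf = comm_monoid.finprod_multf[OF comm_monoid_vec, folded finsum_vec_def, unfolded monoid_vec_simps]
lemmas vs_one = comm_monoid.finprod_one[OF comm_monoid_vec, folded finsum_vec_def, unfolded monoid_vec_simps]
lemmas vs_cong = comm_monoid.finprod_cong'[OF comm_monoid_vec, folded finsum_vec_def, unfolded monoid_vec_simps]

lemma vsum_closed: "f \<in> S \<rightarrow> carrier_vec n \<Longrightarrow> vsum n f S \<in> carrier_vec n"
  unfolding vsum_def by (rule finsum_vec_closed)

lemma vsum_add: "f \<in> S \<rightarrow> carrier_vec n \<Longrightarrow> g \<in> S \<rightarrow> carrier_vec n \<Longrightarrow>
   vsum n (\<lambda>x. f x + g x) S = vsum n f S + vsum n g S"
  unfolding vsum_def by (rule vs_multf)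

lemma vsum_zero: "vsum n (\<lambda>x. 0\<^sub>v n) S = 0\<^sub>v n"
  unfolding vsum_def by (rule vs_one)

lemma vsum_cong: "S = T \<Longrightarrow> g \<in> T \<rightarrow> carrier_vec n \<Longrightarrow> (\<And>x. x \<in> T \<Longrightarrow> f x = g x) \<Longrightarrow>
   vsum n f S = vsum n g T"
  unfolding vsum_def by (rule vs_cong) auto

lemma vsum_insert: "finite S \<Longrightarrow> a \<notin> S \<Longrightarrow> f a \<in> carrier_vec n \<Longrightarrow> f \<in> S \<rightarrow> carrier_vec n \<Longrightarrow>
   vsum n f (insert a S) = f a + vsum n f S"
  unfolding vsum_def by (rule finsum_vec_insert) auto

lemma mv_carrier: assumes "A \<in> carrier_mat n n'" shows "A *\<^sub>v v \<in> carrier_vec n"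
  by (rule carrier_vecI, simp add: carrier_matD(1)[OF assms])

lemma vsum_mult:
  assumes A: "A \<in> carrier_mat n n'" and fin: "finite S" and f: "f \<in> S \<rightarrow> carrier_vec n'"
  shows "A *\<^sub>v vsum n' f S = vsum n (\<lambda>x. A *\<^sub>v f x) S"
  using fin f
proof (induction S rule: finite_induct)
  case empty
  have e1: "vsum n' f {} = 0\<^sub>v n'" "vsum n (\<lambda>x. A *\<^sub>v f x) {} = 0\<^sub>v n"
    unfolding vsum_def by (rule finsum_vec_empty)+
  have "A *\<^sub>v 0\<^sub>v n' = 0\<^sub>v n"
  proof (rule eq_vecI)
    fix i assume "i < dim_vec (0\<^sub>v n)"
    then have i: "i < dim_row A" using A by simp
    show "(A *\<^sub>v 0\<^sub>v n') $ i = 0\<^sub>v n $ i"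
      using i A by (simp add: scalar_prod_def)
  qed (use A in simp)
  then show ?case unfolding e1 .
next
  case (insert a S)
  have fS: "f \<in> S \<rightarrow> carrier_vec n'" and fa: "f a \<in> carrier_vec n'" using insert by auto
  have "A *\<^sub>v vsum n' f (insert a S) = A *\<^sub>v (f a + vsum n' f S)"
    using vsum_insert[OF insert(1,2) fa fS] by simp
  also have "\<dots> = A *\<^sub>v f a + A *\<^sub>v vsum n' f S"
    by (rule mult_add_distrib_mat_vec[OF A fa vsum_closed[OF fS]])
  also have "\<dots> = A *\<^sub>v f a + vsum n (\<lambda>x. A *\<^sub>v f x) S" using insert(3) fS by simp
  also have "\<dots> = vsum n (\<lambda>x. A *\<^sub>v f x) (insert a S)"
    by (rule vsum_insert[symmetric], insert insert(1,2) A, auto intro: mv_carrier)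
  finally show ?case .
qed

lemma pow_mat_Suc_left: assumes A: "A \<in> carrier_mat n n"
  shows "A ^\<^sub>m Suc p = A * A ^\<^sub>m p"
proof (induction p)
  case 0
  then show ?case using A by auto
next
  case (Suc p)
  have "A ^\<^sub>m Suc (Suc p) = (A * A ^\<^sub>m p) * A" using Suc by simp
  also have "\<dots> = A * (A ^\<^sub>m p * A)" using A by (intro assoc_mult_mat) auto
  finally show ?case by simp
qed

definition Sfun :: "(nat \<Rightarrow> nat) \<Rightarrow> (nat \<Rightarrow> nat \<Rightarrow> real mat) \<Rightarrow> (nat \<Rightarrow> nat \<Rightarrow> nat \<Rightarrow> real vec)
   \<Rightarrow> nat \<Rightarrow> (nat \<Rightarrow> nat) \<Rightarrow> nat \<Rightarrow> nat \<Rightarrow> real vec" where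
  "Sfun d Ab zh j v k m = vsum (d j) (\<lambda>q. vsum (d j)
                  (\<lambda>t. (Ab j j ^\<^sub>m (k - t - 1) * Ab j q) *\<^sub>v zh q (v (t + 1)) t) {k - m..<k})
                 {1..<j}"

lemma step_alg:
  fixes d :: "nat \<Rightarrow> nat" and Ab :: "nat \<Rightarrow> nat \<Rightarrow> real mat" and zh :: "nat \<Rightarrow> nat \<Rightarrow> nat \<Rightarrow> real vec"
  assumes A: "Ab j j \<in> carrier_mat (d j) (d j)"
  and B: "\<And>q. q \<in> {1..<j} \<Longrightarrow> Ab j q \<in> carrier_mat (d j) (d q)"
  and x: "x \<in> carrier_vec (d j)"
  and Zc: "\<And>q t. q \<in> {1..<j} \<Longrightarrow> t \<in> {k'-m'..<k'} \<Longrightarrow> zh q (v' (t+1)) t \<in> carrier_vec (d q)"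
  and mk: "m' \<le> k'"
  shows "Ab j j *\<^sub>v (Ab j j ^\<^sub>m m' *\<^sub>v x + Sfun d Ab zh j v' k' m') + coupling d Ab zh j i k'
       = Ab j j ^\<^sub>m Suc m' *\<^sub>v x + Sfun d Ab zh j (v'(Suc k' := i)) (Suc k') (Suc m')"
proof -
  define A where "A = Ab j j"
  define n where "n = d j"
  define T where "T = {k'-m'..<k'}"
  define Q where "Q = {1..<j::nat}"
  define v where "v = v'(Suc k' := i)"
  define f where "f q t = (A ^\<^sub>m (k' - t - 1) * Ab j q) *\<^sub>v zh q (v' (t + 1)) t" for q t
  define g where "g q t = (A ^\<^sub>m (Suc k' - t - 1) * Ab j q) *\<^sub>v zh q (v (t + 1)) t" for q t
  have An: "A \<in> carrier_mat n n" using A unfolding A_def n_def .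
  have Bq: "Ab j q \<in> carrier_mat n (d q)" if "q \<in> Q" for q using B that unfolding Q_def n_def by blast
  have fc: "f q t \<in> carrier_vec n" if "q \<in> Q" for q t
    unfolding f_def by (rule mv_carrier, rule mult_carrier_mat[OF pow_carrier_mat[OF An] Bq[OF that]])
  have gc: "g q t \<in> carrier_vec n" if "q \<in> Q" for q t
    unfolding g_def by (rule mv_carrier, rule mult_carrier_mat[OF pow_carrier_mat[OF An] Bq[OF that]])
  have fin: "finite T" "k' \<notin> T" unfolding T_def by auto
  have S'def: "Sfun d Ab zh j v' k' m' = vsum n (\<lambda>q. vsum n (f q) T) Q"
    unfolding Sfun_def f_def A_def n_def T_def Q_def ..
  have Sdef: "Sfun d Ab zh j v (Suc k') (Suc m') = vsum n (\<lambda>q. vsum n (g q) (insert k' T)) Q"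
  proof -
    have "{Suc k' - Suc m'..<Suc k'} = insert k' T" unfolding T_def using mk by auto
    then show ?thesis unfolding Sfun_def g_def A_def n_def Q_def by simp
  qed
  have gk: "g q k' = Ab j q *\<^sub>v zh q i k'" if "q \<in> Q" for q
  proof -
    have "A ^\<^sub>m 0 = 1\<^sub>m n" using An by simp
    then show ?thesis unfolding g_def v_def using Bq[OF that] by simp
  qed
  have gT: "g q t = A *\<^sub>v f q t" if q: "q \<in> Q" and t: "t \<in> T" for q t
  proof -
    have tk: "t < k'" using t unfolding T_def by auto
    have vt: "v (t+1) = v' (t+1)" unfolding v_def using tk by auto
    have z: "zh q (v' (t+1)) t \<in> carrier_vec (d q)" using Zc q t unfolding Q_def T_def by blast
    have p: "Suc k' - t - 1 = Suc (k' - t - 1)" using tk by simp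
    have "A *\<^sub>v f q t = (A * (A ^\<^sub>m (k' - t - 1) * Ab j q)) *\<^sub>v zh q (v' (t + 1)) t"
      unfolding f_def
      by (rule assoc_mult_mat_vec[symmetric, OF An mult_carrier_mat[OF pow_carrier_mat[OF An] Bq[OF q]] z])
    also have "A * (A ^\<^sub>m (k' - t - 1) * Ab j q) = (A * A ^\<^sub>m (k' - t - 1)) * Ab j q"
      by (rule assoc_mult_mat[symmetric, OF An pow_carrier_mat[OF An] Bq[OF q]])
    also have "A * A ^\<^sub>m (k' - t - 1) = A ^\<^sub>m (Suc k' - t - 1)"
      unfolding p by (rule pow_mat_Suc_left[OF An, symmetric])
    finally show ?thesis unfolding g_def vt by simp
  qed
  have inner: "vsum n (g q) (insert k' T) = Ab j q *\<^sub>v zh q i k' + A *\<^sub>v vsum n (f q) T" if q: "q \<in> Q" for q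
  proof -
    have "vsum n (g q) (insert k' T) = g q k' + vsum n (g q) T"
      by (rule vsum_insert[OF fin gc[OF q]], use gc[OF q] in blast)
    also have "vsum n (g q) T = vsum n (\<lambda>t. A *\<^sub>v f q t) T"
      by (rule vsum_cong, simp, use An in \<open>blast intro: mv_carrier\<close>, rule gT[OF q])
    also have "\<dots> = A *\<^sub>v vsum n (f q) T"
      by (rule vsum_mult[symmetric, OF An fin(1)], use fc[OF q] in blast)
    finally show ?thesis unfolding gk[OF q] .
  qed
  have S': "vsum n (\<lambda>q. vsum n (f q) T) Q \<in> carrier_vec n"
    by (rule vsum_closed, rule Pi_I, rule vsum_closed, rule Pi_I, rule fc)
  have Ceq: "coupling d Ab zh j i k' = vsum n (\<lambda>q. Ab j q *\<^sub>v zh q i k') Q"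
    unfolding coupling_def n_def Q_def ..
  have C: "coupling d Ab zh j i k' \<in> carrier_vec n"
    unfolding Ceq by (rule vsum_closed, rule Pi_I, rule mv_carrier, rule Bq)
  have "Sfun d Ab zh j v (Suc k') (Suc m') = vsum n (\<lambda>q. Ab j q *\<^sub>v zh q i k' + A *\<^sub>v vsum n (f q) T) Q"
    unfolding Sdef by (rule vsum_cong, simp, rule Pi_I, rule add_carrier_vec, rule mv_carrier, rule Bq, assumption, rule mv_carrier[OF An], rule inner)
  also have "\<dots> = coupling d Ab zh j i k' + vsum n (\<lambda>q. A *\<^sub>v vsum n (f q) T) Q"
    unfolding Ceq
    by (rule vsum_add, rule Pi_I, rule mv_carrier, rule Bq, assumption, rule Pi_I, rule mv_carrier[OF An])
  also have "vsum n (\<lambda>q. A *\<^sub>v vsum n (f q) T) Q = A *\<^sub>v Sfun d Ab zh j v' k' m'"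
    unfolding S'def by (rule vsum_mult[symmetric, OF An], simp add: Q_def, rule Pi_I, rule vsum_closed, rule Pi_I, rule fc)
  finally have Snew: "Sfun d Ab zh j v (Suc k') (Suc m') = coupling d Ab zh j i k' + A *\<^sub>v Sfun d Ab zh j v' k' m'" .
  have xn: "x \<in> carrier_vec n" using x unfolding n_def .
  have S'c: "Sfun d Ab zh j v' k' m' \<in> carrier_vec n" using S' unfolding S'def .
  have P: "A ^\<^sub>m m' *\<^sub>v x \<in> carrier_vec n" by (rule mv_carrier[OF pow_carrier_mat[OF An]])
  have "A *\<^sub>v (A ^\<^sub>m m' *\<^sub>v x + Sfun d Ab zh j v' k' m') = A *\<^sub>v (A ^\<^sub>m m' *\<^sub>v x) + A *\<^sub>v Sfun d Ab zh j v' k' m'"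
    by (rule mult_add_distrib_mat_vec[OF An P S'c])
  also have "A *\<^sub>v (A ^\<^sub>m m' *\<^sub>v x) = A ^\<^sub>m Suc m' *\<^sub>v x"
    using assoc_mult_mat_vec[OF An pow_carrier_mat[OF An] xn] pow_mat_Suc_left[OF An] by simp
  finally have 1: "A *\<^sub>v (A ^\<^sub>m m' *\<^sub>v x + Sfun d Ab zh j v' k' m') = A ^\<^sub>m Suc m' *\<^sub>v x + A *\<^sub>v Sfun d Ab zh j v' k' m'" .
  have AS: "A *\<^sub>v Sfun d Ab zh j v' k' m' \<in> carrier_vec n" by (rule mv_carrier[OF An])
  have P2: "A ^\<^sub>m Suc m' *\<^sub>v x \<in> carrier_vec n" by (rule mv_carrier[OF pow_carrier_mat[OF An]])
  show ?thesis unfolding A_def[symmetric] v_def[symmetric] 1 Snew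
    using assoc_add_vec[OF P2 AS C] comm_add_vec[OF AS C] by simp
qed

lemma add_carrier_right: "b \<in> carrier_vec n \<Longrightarrow> a + b \<in> carrier_vec n"
  by (rule carrier_vecI) (simp add: carrier_vecD)

theorem lemma3:
  fixes N :: nat and d r :: "nat \<Rightarrow> nat"
    and Ab Cb :: "nat \<Rightarrow> nat \<Rightarrow> real mat" and L :: "nat \<Rightarrow> real mat"
    and z :: "nat \<Rightarrow> nat \<Rightarrow> real vec" and y :: "nat \<Rightarrow> nat \<Rightarrow> real vec"
    and G :: "nat \<Rightarrow> (nat \<times> nat) set"
    and tau :: "nat \<Rightarrow> nat \<Rightarrow> nat \<Rightarrow> nat option"
    and zh :: "nat \<Rightarrow> nat \<Rightarrow> nat \<Rightarrow> real vec"
    and j i k m :: nat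
  assumes Ab_dim: "\<And>p q. p \<in> {1..N} \<Longrightarrow> q \<in> {1..p} \<Longrightarrow> Ab p q \<in> carrier_mat (d p) (d q)"
    and Cb_dim: "\<And>p q. p \<in> {1..N} \<Longrightarrow> q \<in> {1..p} \<Longrightarrow> Cb p q \<in> carrier_mat (r p) (d q)"
    and L_dim: "\<And>p. p \<in> {1..N} \<Longrightarrow> L p \<in> carrier_mat (d p) (r p)"
    and z_dim: "\<And>p. p \<in> {1..N} \<Longrightarrow> z p 0 \<in> carrier_vec (d p)"
    and z_dyn: "\<And>p t. p \<in> {1..N} \<Longrightarrow>
                  z p (Suc t) = Ab p p *\<^sub>v z p t + vsum (d p) (\<lambda>q. Ab p q *\<^sub>v z q t) {1..<p}"
    and y_def: "\<And>p t. p \<in> {1..N} \<Longrightarrow> y p t = vsum (r p) (\<lambda>q. Cb p q *\<^sub>v z q t) {1..p}"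
    and alg: "algorithm1 N d Ab Cb L y G tau zh"
    and j: "j \<in> {1..N}" and i: "i \<in> {1..N}" and ij: "i \<noteq> j"
    and tau_ik: "tau j i k = Some m" and m_pos: "m > 0"
  shows "\<exists>v :: nat \<Rightarrow> nat.
           v k = i \<and> (\<forall>t\<in>{k - m + 1..k}. v t \<in> {1..N} - {j}) \<and>
           zh j i k = (Ab j j ^\<^sub>m m) *\<^sub>v zh j j (k - m)
             + vsum (d j) (\<lambda>q. vsum (d j)
                  (\<lambda>t. (Ab j j ^\<^sub>m (k - t - 1) * Ab j q) *\<^sub>v zh q (v (t + 1)) t) {k - m..<k})
                 {1..<j}"
proof -
  note algd = alg[unfolded algorithm1_def]
  have a0: "\<And>q w. q \<in> {1..N} \<Longrightarrow> w \<in> {1..N} \<Longrightarrow> zh q w 0 \<in> carrier_vec (d q)"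
    using algd by blast
  have t0: "\<And>q w. q \<in> {1..N} \<Longrightarrow> w \<in> {1..N} \<Longrightarrow> w \<noteq> q \<Longrightarrow> tau q w 0 = None"
    using algd by blast
  have src: "\<And>q t. q \<in> {1..N} \<Longrightarrow> tau q q t = Some 0 \<and>
        zh q q (Suc t) = (Ab q q - L q * Cb q q) *\<^sub>v zh q q t
                         + vsum (d q) (\<lambda>p. (Ab q p - L q * Cb q p) *\<^sub>v zh p q t) {1..<q}
                         + L q *\<^sub>v y q t"
    using algd by blast
  have nsrc: "\<And>q w t. q \<in> {1..N} \<Longrightarrow> w \<in> {1..N} \<Longrightarrow> w \<noteq> q \<Longrightarrow>
        (Fset N G tau q w t \<noteq> {} \<longrightarrow>
           (\<exists>u\<in>Fset N G tau q w t.
              (\<forall>l\<in>Fset N G tau q w t. the (tau q u t) \<le> the (tau q l t)) \<and>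
              tau q w (Suc t) = Some (Suc (the (tau q u t))) \<and>
              zh q w (Suc t) = Ab q q *\<^sub>v zh q u t + coupling d Ab zh q w t)) \<and>
        (Fset N G tau q w t = {} \<longrightarrow>
           tau q w (Suc t) = map_option Suc (tau q w t) \<and>
           zh q w (Suc t) = Ab q q *\<^sub>v zh q w t + coupling d Ab zh q w t)"
    using algd by blast
  have Fsub: "\<And>q w t u. u \<in> Fset N G tau q w t \<Longrightarrow> u \<in> {1..N} \<and> u \<noteq> w \<and> tau q u t \<noteq> None"
    unfolding Fset_def Mset_def nbrs_def by (auto split: if_splits)
  have coup: "\<And>q w t. q \<in> {1..N} \<Longrightarrow> coupling d Ab zh q w t \<in> carrier_vec (d q)"
    unfolding coupling_def
    by (rule vsum_closed, rule Pi_I, rule mv_carrier, rule Ab_dim, assumption, auto)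
  have zdim: "zh q w t \<in> carrier_vec (d q)" if q: "q \<in> {1..N}" and w: "w \<in> {1..N}" for q w t
  proof (cases t)
    case 0
    then show ?thesis using a0 q w by simp
  next
    case (Suc t')
    show ?thesis
    proof (cases "w = q")
      case True
      have "L q *\<^sub>v y q t' \<in> carrier_vec (d q)" by (rule mv_carrier, rule L_dim[OF q])
      then show ?thesis using src[OF q, of t'] True Suc by (simp add: add_carrier_right)
    next
      case False
      then show ?thesis using nsrc[OF q w False, of t'] Suc coup[OF q]
        by (cases "Fset N G tau q w t' = {}") (auto simp: add_carrier_right)
    qed
  qed
  have T1: "tau j w t = None \<or> (\<exists>m. tau j w t = Some m \<and> 1 \<le> m \<and> m \<le> t)"
    if "w \<in> {1..N}" "w \<noteq> j" for w t
    using that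
  proof (induction t arbitrary: w)
    case 0
    then show ?case using t0[OF j] by simp
  next
    case (Suc t)
    note ns = nsrc[OF j Suc.prems(1,2), of t]
    show ?case
    proof (cases "Fset N G tau j w t = {}")
      case True
      then show ?thesis using ns Suc.IH[OF Suc.prems] by auto
    next
      case False
      then obtain u where u: "u \<in> Fset N G tau j w t"
        "tau j w (Suc t) = Some (Suc (the (tau j u t)))" using ns by blast
      have uu: "u \<in> {1..N}" "tau j u t \<noteq> None" using Fsub[OF u(1)] by auto
      show ?thesis
      proof (cases "u = j")
        case True
        then show ?thesis using u(2) src[OF j, of t] by simp
      next
        case False
        then show ?thesis using Suc.IH[OF uu(1) False] uu(2) u(2) by auto
      qed
    qed
  qed
  have Adim: "Ab j j \<in> carrier_mat (d j) (d j)" using Ab_dim[OF j] j by auto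
  have Bdim: "\<And>q. q \<in> {1..<j} \<Longrightarrow> Ab j q \<in> carrier_mat (d j) (d q)" using Ab_dim[OF j] by auto
  have step: "\<exists>v. v (Suc k') = i' \<and> (\<forall>t\<in>{Suc k' - Suc m' + 1..Suc k'}. v t \<in> {1..N} - {j}) \<and>
       zh j i' (Suc k') = Ab j j ^\<^sub>m Suc m' *\<^sub>v zh j j (Suc k' - Suc m') + Sfun d Ab zh j v (Suc k') (Suc m')"
    if hw: "zh j w k' = Ab j j ^\<^sub>m m' *\<^sub>v zh j j (k' - m') + Sfun d Ab zh j v' k' m'"
    and hv: "\<forall>t\<in>{k' - m' + 1..k'}. v' t \<in> {1..N} - {j}"
    and mk: "m' \<le> k'"
    and hi: "zh j i' (Suc k') = Ab j j *\<^sub>v zh j w k' + coupling d Ab zh j i' k'"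
    and i': "i' \<in> {1..N} - {j}"
    for w k' m' v' i'
  proof -
    have Zc: "zh q (v' (t+1)) t \<in> carrier_vec (d q)" if "q \<in> {1..<j}" "t \<in> {k'-m'..<k'}" for q t
    proof (rule zdim)
      show "q \<in> {1..N}" using that(1) j by auto
      have "t + 1 \<in> {k' - m' + 1..k'}" using that(2) by auto
      then show "v' (t+1) \<in> {1..N}" using hv by blast
    qed
    have x: "zh j j (k' - m') \<in> carrier_vec (d j)" by (rule zdim[OF j j])
    have e: "zh j i' (Suc k') = Ab j j ^\<^sub>m Suc m' *\<^sub>v zh j j (k' - m') + Sfun d Ab zh j (v'(Suc k' := i')) (Suc k') (Suc m')"
      unfolding hi hw by (rule step_alg[where d=d and Ab=Ab and j=j and zh=zh and x="zh j j (k' - m')" and v'=v' and k'=k' and m'=m', OF Adim Bdim x Zc mk])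
    show ?thesis
    proof (rule exI[of _ "v'(Suc k' := i')"], intro conjI)
      show "(v'(Suc k' := i')) (Suc k') = i'" by simp
      show "\<forall>t\<in>{Suc k' - Suc m' + 1..Suc k'}. (v'(Suc k' := i')) t \<in> {1..N} - {j}"
        using hv i' mk by auto
      show "zh j i' (Suc k') = Ab j j ^\<^sub>m Suc m' *\<^sub>v zh j j (Suc k' - Suc m') + Sfun d Ab zh j (v'(Suc k' := i')) (Suc k') (Suc m')"
        using e by simp
    qed
  qed
  have base: "zh j j k' = Ab j j ^\<^sub>m 0 *\<^sub>v zh j j (k' - 0) + Sfun d Ab zh j v' k' 0" for k' v'
  proof -
    have "Sfun d Ab zh j v' k' 0 = vsum (d j) (\<lambda>q. 0\<^sub>v (d j)) {1..<j}"
      unfolding Sfun_def vsum_def by (simp add: finsum_vec_empty)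
    also have "\<dots> = 0\<^sub>v (d j)" by (rule vsum_zero)
    finally show ?thesis using zdim[OF j j, of k'] Adim by simp
  qed
  have main: "\<exists>v. v k = i \<and> (\<forall>t\<in>{k - Suc m + 1..k}. v t \<in> {1..N} - {j}) \<and>
       zh j i k = Ab j j ^\<^sub>m Suc m *\<^sub>v zh j j (k - Suc m) + Sfun d Ab zh j v k (Suc m)"
    if "i \<in> {1..N}" "i \<noteq> j" "tau j i k = Some (Suc m)" for m i k
    using that
  proof (induction m arbitrary: i k)
    case m: (0 i k)
    obtain k' where k: "k = Suc k'" using m t0[OF j m(1,2)] by (cases k) auto
    note ns = nsrc[OF j m(1,2), of k']
    show ?case
    proof (cases "Fset N G tau j i k' = {}")
      case True
      then have "tau j i k' = Some 0" using ns m(3) k by auto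
      then show ?thesis using T1[OF m(1,2), of k'] by auto
    next
      case False
      then obtain u where u: "u \<in> Fset N G tau j i k'"
        "tau j i (Suc k') = Some (Suc (the (tau j u k')))"
        "zh j i (Suc k') = Ab j j *\<^sub>v zh j u k' + coupling d Ab zh j i k'" using ns by blast
      have uu: "u \<in> {1..N}" "tau j u k' \<noteq> None" using Fsub[OF u(1)] by auto
      have t0': "the (tau j u k') = 0" using u(2) m(3) k by simp
      have "u = j"
      proof (rule ccontr)
        assume "u \<noteq> j"
        then show False using T1[OF uu(1), of k'] uu(2) t0' by auto
      qed
      then have u3: "zh j i (Suc k') = Ab j j *\<^sub>v zh j j k' + coupling d Ab zh j i k'" using u(3) by simp
      have "\<exists>v. v (Suc k') = i \<and> (\<forall>t\<in>{Suc k' - Suc 0 + 1..Suc k'}. v t \<in> {1..N} - {j}) \<and>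
       zh j i (Suc k') = Ab j j ^\<^sub>m Suc 0 *\<^sub>v zh j j (Suc k' - Suc 0) + Sfun d Ab zh j v (Suc k') (Suc 0)"
        by (rule step[OF base[of k' "\<lambda>_. i"] _ _ u3]) (use m in auto)
      then show ?thesis unfolding k .
    qed
  next
    case (Suc m'' i k)
    obtain k' where k: "k = Suc k'" using Suc.prems t0[OF j Suc.prems(1,2)] by (cases k) auto
    note ns = nsrc[OF j Suc.prems(1,2), of k']
    have gen: "\<exists>v. v k = i \<and> (\<forall>t\<in>{k - Suc (Suc m'') + 1..k}. v t \<in> {1..N} - {j}) \<and>
       zh j i k = Ab j j ^\<^sub>m Suc (Suc m'') *\<^sub>v zh j j (k - Suc (Suc m'')) + Sfun d Ab zh j v k (Suc (Suc m''))"
      if w: "w \<in> {1..N}" "w \<noteq> j" "tau j w k' = Some (Suc m'')"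
        and hi: "zh j i (Suc k') = Ab j j *\<^sub>v zh j w k' + coupling d Ab zh j i k'" for w
    proof -
      obtain v' where v': "v' k' = w" "\<forall>t\<in>{k' - Suc m'' + 1..k'}. v' t \<in> {1..N} - {j}"
        "zh j w k' = Ab j j ^\<^sub>m Suc m'' *\<^sub>v zh j j (k' - Suc m'') + Sfun d Ab zh j v' k' (Suc m'')"
        using Suc.IH[OF w] by blast
      have mk: "Suc m'' \<le> k'" using T1[OF w(1,2), of k'] w(3) by auto
      show ?thesis unfolding k
        by (rule step[OF v'(3) v'(2) mk hi], use Suc.prems in auto)
    qed
    show ?case
    proof (cases "Fset N G tau j i k' = {}")
      case True
      then have "tau j i k' = Some (Suc m'')" using ns Suc.prems(3) k by auto
      then show ?thesis using gen[OF Suc.prems(1,2)] True ns by blast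
    next
      case False
      then obtain u where u: "u \<in> Fset N G tau j i k'"
        "tau j i (Suc k') = Some (Suc (the (tau j u k')))"
        "zh j i (Suc k') = Ab j j *\<^sub>v zh j u k' + coupling d Ab zh j i k'" using ns by blast
      have uu: "u \<in> {1..N}" "tau j u k' \<noteq> None" using Fsub[OF u(1)] by auto
      have tu: "tau j u k' = Some (Suc m'')" using u(2) Suc.prems(3) k uu(2) by auto
      have "u \<noteq> j" using tu src[OF j, of k'] by auto
      then show ?thesis using gen[OF uu(1) _ tu u(3)] by blast
    qed
  qed
  obtain m0 where m0: "m = Suc m0" using m_pos by (cases m) auto
  from main[OF i ij tau_ik[unfolded m0]] obtain v where
    "v k = i" "\<forall>t\<in>{k - Suc m0 + 1..k}. v t \<in> {1..N} - {j}"
    "zh j i k = Ab j j ^\<^sub>m Suc m0 *\<^sub>v zh j j (k - Suc m0) + Sfun d Ab zh j v k (Suc m0)" by blast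
  then show ?thesis unfolding m0 Sfun_def by blast
qed

end
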